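(* Let $(M,d)$ be a pointed metric space with $d(x,y)\in\mathbb N\cup\{0\}$ for all $x,y\in M$, and let $A\subseteq\widetilde M$ be cyclically monotonic. Then there exists $f\in B_{\mathrm{Lip}_0(M)}$ such that $f(x)\in\mathbb Z$ for all $x\in M$ and $f(m_{x,y})=1$ for all $(x,y)\in A$.
   Context: $M$ has base point $0$; $\mathrm{Lip}_0(M)$ is the real Banach space of Lipschitz $f\colon M\to\mathbb R$ with $f(0)=0$, normed by the best Lipschitz constant, with unit ball $B_{\mathrm{Lip}_0(M)}$. $\widetilde M=\{(x,y)\in M\times M:x\ne y\}$ and $f(m_{x,y})=(f(x)-f(y))/d(x,y)$. $A\subseteq\widetilde M$ is cyclically monotonic if for every finite sequence $(x_1,y_1),\dots,(x_n,y_n)\in A$, with $y_{n+1}=y_1$, $\sum_i d(x_i,y_{i+1})\ge\sum_i d(x_i,y_i)$. *)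

theory Defs
  imports "HOL-Analysis.Analysis"
begin

definition pairs_distinct :: "('a \<times> 'a) set" where
  "pairs_distinct = {(x, y). x \<noteq> y}"

text \<open>Evaluation of f at the molecule m_{x,y}.\<close>
definition mol_eval :: "('a::metric_space \<Rightarrow> real) \<Rightarrow> 'a \<Rightarrow> 'a \<Rightarrow> real" where
  "mol_eval f x y = (f x - f y) / dist x y"

text \<open>Cyclic monotonicity: for every finite nonempty sequence (x_1,y_1),...,(x_n,y_n) in A,
  with y_{n+1} = y_1, sum d(x_i, y_{i+1}) >= sum d(x_i, y_i). Indices are 0..n-1 here.\<close>
definition cyclically_monotonic :: "('a::metric_space \<times> 'a) set \<Rightarrow> bool" where
  "cyclically_monotonic A \<longleftrightarrow>
     A \<subseteq> pairs_distinct \<and>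
     (\<forall>n::nat. \<forall>p :: nat \<Rightarrow> 'a \<times> 'a. n \<ge> 1 \<longrightarrow> (\<forall>i<n. p i \<in> A) \<longrightarrow>
        (\<Sum>i<n. dist (fst (p i)) (snd (p i))) \<le> (\<Sum>i<n. dist (fst (p i)) (snd (p (Suc i mod n)))))"

end

theory Submission
  imports Defs
begin

lemma Inf_Ints_mem:
  fixes S :: "real set"
  assumes "S \<subseteq> \<int>" "S \<noteq> {}" "bdd_below S"
  shows "Inf S \<in> S"
proof -
  obtain s where s: "s \<in> S" "s < Inf S + 1"
    using cInf_lessD[OF assms(2), of "Inf S + 1"] by auto
  have sge: "Inf S \<le> s" using cInf_lower[OF s(1) assms(3)] .
  have "s \<le> t" if tS: "t \<in> S" for t
  proof (rule ccontr)
    assume "\<not> s \<le> t"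
    hence ts: "t < s" by simp
    have "Inf S \<le> t" using cInf_lower[OF tS assms(3)] .
    have "s \<in> \<int>" using assms(1) s(1) by blast
    then obtain a where a: "s = of_int a" by (rule Ints_cases)
    have "t \<in> \<int>" using assms(1) tS by blast
    then obtain b where b: "t = of_int b" by (rule Ints_cases)
    have "real_of_int b < real_of_int a" using ts a b by simp
    hence "b < a" by linarith
    have "real_of_int a < real_of_int (b + 1)" using s(2) sge \<open>Inf S \<le> t\<close> a b by simp
    hence "a < b + 1" by linarith
    with \<open>b < a\<close> show False by linarith
  qed
  hence "s \<le> Inf S" using cInf_greatest[OF assms(2)] by blast
  with sge s(1) show ?thesis by simp
qed

definition chainvals :: "('a::metric_space \<times> 'a) set \<Rightarrow> 'a \<Rightarrow> 'a \<Rightarrow> 'a \<Rightarrow> real set" where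
  "chainvals A x0 y0 z = {dist z (snd (p 0)) +
     (\<Sum>i<n. dist (fst (p i)) (snd (p (Suc i))) - dist (fst (p i)) (snd (p i))) | n p.
       (\<forall>i<n. p i \<in> A) \<and> p n = (x0, y0)}"

lemma chainvals_ne: "dist z y0 \<in> chainvals A x0 y0 z"
  unfolding chainvals_def
  by (rule CollectI, rule exI[of _ 0], rule exI[of _ "\<lambda>_. (x0,y0)"]) simp

lemma chainvals_lb:
  assumes cm: "cyclically_monotonic A" and x0A: "(x0,y0) \<in> A"
    and v: "v \<in> chainvals A x0 y0 z"
  shows "dist x0 y0 - dist z x0 \<le> v"
proof -
  from v obtain n p where p: "\<forall>i<n. p i \<in> A" "p n = (x0,y0)"
    and vd: "v = dist z (snd (p 0)) +
     (\<Sum>i<n. dist (fst (p i)) (snd (p (Suc i))) - dist (fst (p i)) (snd (p i)))"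
    unfolding chainvals_def by blast
  have pA: "\<forall>i<Suc n. p i \<in> A"
  proof (intro allI impI)
    fix i assume "i < Suc n"
    thus "p i \<in> A" using p x0A by (cases "i = n") auto
  qed
  have cyc: "(\<Sum>i<Suc n. dist (fst (p i)) (snd (p i))) \<le> (\<Sum>i<Suc n. dist (fst (p i)) (snd (p (Suc i mod Suc n))))"
  proof -
    have H: "\<forall>n::nat. \<forall>p :: nat \<Rightarrow> 'a \<times> 'a. n \<ge> 1 \<longrightarrow> (\<forall>i<n. p i \<in> A) \<longrightarrow>
        (\<Sum>i<n. dist (fst (p i)) (snd (p i))) \<le> (\<Sum>i<n. dist (fst (p i)) (snd (p (Suc i mod n))))"
      using cm unfolding cyclically_monotonic_def by (elim conjE)
    show ?thesis using H[rule_format, of "Suc n" p] pA by simp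
  qed
  have r: "(\<Sum>i<Suc n. dist (fst (p i)) (snd (p (Suc i mod Suc n)))) =
      (\<Sum>i<n. dist (fst (p i)) (snd (p (Suc i)))) + dist x0 (snd (p 0))"
    using p(2) by (simp add: sum.lessThan_Suc)
  have l: "(\<Sum>i<Suc n. dist (fst (p i)) (snd (p i))) =
      (\<Sum>i<n. dist (fst (p i)) (snd (p i))) + dist x0 y0"
    using p(2) by (simp add: sum.lessThan_Suc)
  have tri: "dist x0 (snd (p 0)) \<le> dist z x0 + dist z (snd (p 0))"
    by (metis dist_commute dist_triangle)
  show ?thesis using cyc r l tri vd by (simp add: sum_subtractf)
qed

lemma chainvals_int:
  assumes nat: "\<forall>x y :: 'a::metric_space. dist x y \<in> \<nat>" and v: "v \<in> chainvals A x0 y0 (z::'a)"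
  shows "v \<in> \<int>"
proof -
  have di: "dist x y \<in> \<int>" for x y :: 'a using nat Nats_subset_Ints by blast
  from v obtain n p where 
    vd: "v = dist z (snd (p 0)) +
     (\<Sum>i<n. dist (fst (p i)) (snd (p (Suc i))) - dist (fst (p i)) (snd (p i)))"
    unfolding chainvals_def by blast
  show ?thesis unfolding vd using di by (intro Ints_add Ints_sum Ints_diff) auto
qed

lemma chainvals_move:
  assumes v: "v \<in> chainvals A x0 y0 z"
  shows "\<exists>w \<in> chainvals A x0 y0 z'. w \<le> v + dist z z'"
proof -
  from v obtain n p where p: "\<forall>i<n. p i \<in> A" "p n = (x0,y0)"
    and vd: "v = dist z (snd (p 0)) +
     (\<Sum>i<n. dist (fst (p i)) (snd (p (Suc i))) - dist (fst (p i)) (snd (p i)))"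
    unfolding chainvals_def by blast
  let ?w = "dist z' (snd (p 0)) +
     (\<Sum>i<n. dist (fst (p i)) (snd (p (Suc i))) - dist (fst (p i)) (snd (p i)))"
  have "?w \<in> chainvals A x0 y0 z'" unfolding chainvals_def using p by blast
  moreover have "dist z' (snd (p 0)) \<le> dist z (snd (p 0)) + dist z z'"
    by (metis dist_commute dist_triangle)
  ultimately show ?thesis using vd by (intro bexI[of _ ?w]) auto
qed

lemma chainvals_prepend:
  assumes xy: "(x,y) \<in> A" and v: "v \<in> chainvals A x0 y0 x"
  shows "v - dist x y \<in> chainvals A x0 y0 y"
proof -
  from v obtain n p where p: "\<forall>i<n. p i \<in> A" "p n = (x0,y0)"
    and vd: "v = dist x (snd (p 0)) +
     (\<Sum>i<n. dist (fst (p i)) (snd (p (Suc i))) - dist (fst (p i)) (snd (p i)))"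
    unfolding chainvals_def by blast
  define q where "q i = (case i of 0 \<Rightarrow> (x,y) | Suc j \<Rightarrow> p j)" for i
  have q: "\<forall>i<Suc n. q i \<in> A" "q (Suc n) = (x0,y0)"
    using p xy unfolding q_def by (auto split: nat.split)
  have "dist y (snd (q 0)) +
     (\<Sum>i<Suc n. dist (fst (q i)) (snd (q (Suc i))) - dist (fst (q i)) (snd (q i)))
     = v - dist x y"
    unfolding vd by (simp add: sum.lessThan_Suc_shift q_def del: sum.lessThan_Suc)
  moreover have "dist y (snd (q 0)) +
     (\<Sum>i<Suc n. dist (fst (q i)) (snd (q (Suc i))) - dist (fst (q i)) (snd (q i)))
     \<in> chainvals A x0 y0 y"
    unfolding chainvals_def using q by blast
  ultimately show ?thesis by simp
qed

theorem lemma5p1: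
  fixes base :: "'a::metric_space"
    and A :: "('a \<times> 'a) set"
  assumes "\<forall>x y :: 'a. dist x y \<in> \<nat>"
    and "cyclically_monotonic A"
  shows "\<exists>f :: 'a \<Rightarrow> real. f base = 0 \<and> 1-lipschitz_on UNIV f \<and>
           (\<forall>x. f x \<in> \<int>) \<and> (\<forall>(x, y) \<in> A. mol_eval f x y = 1)"
proof (cases "A = {}")
  case True
  show ?thesis
  proof (intro exI[of _ "\<lambda>_. 0"] conjI)
    show "1-lipschitz_on UNIV (\<lambda>_::'a. 0::real)" by (rule lipschitz_onI) auto
  qed (simp_all add: True)
next
  case False
  then obtain x0 y0 where x0A: "(x0,y0) \<in> A" by auto
  define g where "g z = Inf (chainvals A x0 y0 z)" for z
  have ne: "chainvals A x0 y0 z \<noteq> {}" for z using chainvals_ne by blast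
  have bdd: "bdd_below (chainvals A x0 y0 z)" for z
    using chainvals_lb[OF assms(2) x0A] unfolding bdd_below_def by blast
  have gint: "g z \<in> \<int>" for z
    unfolding g_def
  proof -
    have "chainvals A x0 y0 z \<subseteq> \<int>" using chainvals_int[OF assms(1)] by (rule subsetI)
    hence "Inf (chainvals A x0 y0 z) \<in> chainvals A x0 y0 z" by (rule Inf_Ints_mem[OF _ ne bdd])
    thus "Inf (chainvals A x0 y0 z) \<in> \<int>" by (rule chainvals_int[OF assms(1)])
  qed
  have glip: "g z' \<le> g z + dist z z'" for z z'
  proof -
    have "g z' - dist z z' \<le> v" if vz: "v \<in> chainvals A x0 y0 z" for v
    proof -
      obtain w where w: "w \<in> chainvals A x0 y0 z'" "w \<le> v + dist z z'"
        using chainvals_move[OF vz] by blast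
      have "g z' \<le> w" unfolding g_def by (rule cInf_lower[OF w(1) bdd])
      with w(2) show ?thesis by simp
    qed
    hence "g z' - dist z z' \<le> g z" unfolding g_def using cInf_greatest[OF ne] by blast
    thus ?thesis by simp
  qed
  have gA: "g y + dist x y \<le> g x" if "(x,y) \<in> A" for x y
  proof -
    have "g y + dist x y \<le> v" if "v \<in> chainvals A x0 y0 x" for v
    proof -
      have "g y \<le> v - dist x y" unfolding g_def
        using cInf_lower[OF chainvals_prepend[OF \<open>(x,y) \<in> A\<close> that] bdd] .
      thus ?thesis by simp
    qed
    thus ?thesis unfolding g_def using cInf_greatest[OF ne] by blast
  qed
  define f where "f z = g z - g base" for z
  show ?thesis
  proof (intro exI[of _ f] conjI)
    show "f base = 0" unfolding f_def by simp
    show "1-lipschitz_on UNIV f"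
    proof (rule lipschitz_onI)
      fix x y :: 'a
      have "g x \<le> g y + dist y x" "g y \<le> g x + dist x y" using glip[of y x] glip[of x y] by auto
      thus "dist (f x) (f y) \<le> 1 * dist x y"
        unfolding f_def dist_real_def by (auto simp: dist_commute)
    qed simp
    show "\<forall>x. f x \<in> \<int>" unfolding f_def using gint by auto
    show "\<forall>(x, y)\<in>A. mol_eval f x y = 1"
    proof (clarify)
      fix x y assume xy: "(x,y) \<in> A"
      have "x \<noteq> y" using assms(2) xy unfolding cyclically_monotonic_def pairs_distinct_def by auto
      hence dpos: "dist x y > 0" by simp
      have "g x \<le> g y + dist y x" using glip[of x y] by simp
      with gA[OF xy] have "g x - g y = dist x y" by (simp add: dist_commute)
      thus "mol_eval f x y = 1" unfolding mol_eval_def f_def using dpos by simp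
    qed
  qed
qed

end
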